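(* Let $X\in\mathbb{R}^{d\times n}$, $\rho>0$, $\beta_0>0$, $\gamma>1$ and $\beta_k=\gamma^k\beta_0$. Let $F(Z)=\log\det(I+Z^TZ)$ for $Z\in\mathbb{R}^{n\times n}$ and $$L(Z,W,Y,\beta)=F(Z)+\rho\|X-XW\|_F^2+\frac{\beta}{2}\|Z-W\|_F^2+\mathrm{Tr}(Y^T(Z-W)).$$ Let $Z_0\in\mathbb{R}^{n\times n}$, $Y_0=0$, and for $k\ge 0$ define $W_{k+1}=(\beta_k I+2\rho X^TX)^{-1}(2\rho X^TX+Y_k+\beta_k Z_k)$, let $Z_{k+1}$ be a global minimizer of $Z\mapsto L(Z,W_{k+1},Y_k,\beta_k)$, and set $Y_{k+1}=Y_k+\beta_k(Z_{k+1}-W_{k+1})$. Assume moreover that $\beta_{k-1}(Z_k-Z_{k-1})\to 0$ as $k\to\infty$. Then the sequence $\{(Y_k,W_k,Z_k)\}$ has at least one accumulation point $(Y^*,W^*,Z^* )$, and every such accumulation point satisfies the KKT conditions $$Z^*=W^*,\qquad \nabla F(Z^* )+Y^*=0,\qquad 2\rho X^TX(W^*-I)=Y^*,$$ i.e. $(W^*,Z^* )$ is a stationary point of the problem $\min_{Z,W}\ \log\det(I+Z^TZ)+\rho\|X-XW\|_F^2$ subject to $Z=W$.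
   Context: $I$ is the $n\times n$ identity matrix, $\|\cdot\|_F$ the Frobenius norm, $\mathrm{Tr}$ the trace. $\nabla F(Z)=2Z(I+Z^TZ)^{-1}$ is the gradient of $F$; equivalently $U\,\mathrm{diag}\big(\tfrac{2\sigma_i}{1+\sigma_i^2}\big)V^T$ for an SVD $Z=U\,\mathrm{diag}(\sigma_i)V^T$. *)

theory Defs
  imports "HOL-Analysis.Analysis"
begin

text \<open>Matrices are Cartesian-product types: an m x n real matrix is real^'n^'m
  (rows indexed by 'm). Identity is mat 1, product is **.\<close>

definition frob_norm :: "real^'n^'m \<Rightarrow> real" where
  "frob_norm A = sqrt (\<Sum>i\<in>UNIV. \<Sum>j\<in>UNIV. (A $ i $ j)^2)"

definition logdet_F :: "real^'n^'n \<Rightarrow> real" where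
  "logdet_F Z = ln (det (mat 1 + transpose Z ** Z))"

definition grad_F :: "real^'n^'n \<Rightarrow> real^'n^'n" where
  "grad_F Z = 2 *\<^sub>R (Z ** matrix_inv (mat 1 + transpose Z ** Z))"

definition aug_lagr :: "real^'n^'d \<Rightarrow> real \<Rightarrow> real^'n^'n \<Rightarrow> real^'n^'n \<Rightarrow> real^'n^'n \<Rightarrow> real \<Rightarrow> real" where
  "aug_lagr X \<rho> Z W Y \<beta> =
     logdet_F Z + \<rho> * (frob_norm (X - X ** W))^2 + \<beta> / 2 * (frob_norm (Z - W))^2
     + trace (transpose Y ** (Z - W))"

definition accum_point :: "(nat \<Rightarrow> 'a::topological_space) \<Rightarrow> 'a \<Rightarrow> bool" where
  "accum_point s p \<longleftrightarrow> (\<exists>r. strict_mono r \<and> (s \<circ> r) \<longlonglongrightarrow> p)"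

end

theory Submission
  imports Defs
begin

lemma inner_mat: "inner (A::real^'n^'m) B = (\<Sum>i\<in>UNIV. \<Sum>j\<in>UNIV. A$i$j * B$i$j)"
  by (simp add: inner_vec_def)

lemma frob_eq_norm: "frob_norm (A::real^'n^'m) = norm A"
  unfolding frob_norm_def norm_eq_sqrt_inner inner_mat by (simp add: power2_eq_square)

lemma trace_tr_mult: "trace (transpose (A::real^'n^'m) ** B) = inner A B"
  unfolding trace_def transpose_def matrix_matrix_mult_def inner_mat
  apply simp
  by (rule sum.swap)

lemma trace_transpose: "trace (transpose (A::real^'n^'n)) = trace A"
  by (simp add: trace_def transpose_def)

lemma inv_props: "invertible (A::real^'n^'n) \<Longrightarrow> A ** matrix_inv A = mat 1 \<and> matrix_inv A ** A = mat 1"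
  unfolding invertible_def matrix_inv_def by (rule someI_ex)

lemma scaleR_mv: "(k *\<^sub>R (M::real^'n^'m)) *v x = k *\<^sub>R (M *v x)"
  by (simp add: matrix_vector_mult_def vec_eq_iff sum_distrib_left algebra_simps)

lemma posdef_invertible:
  fixes B :: "real^'n^'m"
  assumes c: "c > 0" and d: "d \<ge> 0"
  shows "invertible (c *\<^sub>R mat 1 + d *\<^sub>R (transpose B ** B))"
proof -
  have "\<forall>x. (c *\<^sub>R mat 1 + d *\<^sub>R (transpose B ** B)) *v x = 0 \<longrightarrow> x = 0"
  proof (intro allI impI)
    fix x :: "real^'n"
    assume h: "(c *\<^sub>R mat 1 + d *\<^sub>R (transpose B ** B)) *v x = 0"
    have e: "(c *\<^sub>R mat 1 + d *\<^sub>R (transpose B ** B)) *v x = c *\<^sub>R x + d *\<^sub>R (transpose B *v (B *v x))"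
      by (simp add: matrix_vector_mult_add_rdistrib matrix_vector_mul_assoc scaleR_mv)
    have "inner x (transpose B *v (B *v x)) = inner (B *v x) (B *v x)"
      by (metis dot_lmul_matrix inner_commute transpose_matrix_vector)
    moreover have "inner x (c *\<^sub>R x + d *\<^sub>R (transpose B *v (B *v x))) = 0"
      using h e by simp
    ultimately have "0 = c * inner x x + d * inner (B *v x) (B *v x)"
      by (simp only: inner_add_right inner_scaleR_right)
    moreover have "d * inner (B *v x) (B *v x) \<ge> 0" using d by simp
    ultimately have "c * inner x x \<le> 0" by linarith
    then have "inner x x \<le> 0" using c by (simp add: mult_le_0_iff)
    then show "x = 0" by (metis inner_eq_zero_iff inner_ge_zero order_antisym)
  qed
  then show ?thesis
    by (simp add: invertible_left_inverse matrix_left_invertible_ker)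
qed

lemma inv_unique: "(A::real^'n^'n) ** B = mat 1 \<Longrightarrow> C ** A = mat 1 \<Longrightarrow> B = C"
  by (metis matrix_mul_assoc matrix_mul_lid matrix_mul_rid)

lemma inv_sym:
  assumes "transpose (M::real^'n^'n) = M" "invertible M"
  shows "transpose (matrix_inv M) = matrix_inv M"
proof -
  have i: "M ** matrix_inv M = mat 1" "matrix_inv M ** M = mat 1" using inv_props[OF assms(2)] by auto
  have "transpose (matrix_inv M) ** M = mat 1"
    by (metis assms(1) i(1) matrix_transpose_mul transpose_mat)
  then show ?thesis using inv_unique[OF i(1)] by metis
qed

lemma det_pos: "det (mat 1 + transpose Z ** (Z::real^'n^'n)) > 0"
proof -
  define K where "K = transpose Z ** Z"
  define h where "h = (\<lambda>s::real. det (mat 1 + s *\<^sub>R K))"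
  have cont: "continuous_on {0..1} h"
    unfolding h_def det_def by (simp add: mat_def) (intro continuous_intros)
  have nz: "h s \<noteq> 0" if "0 \<le> s" for s
  proof -
    have "invertible (1 *\<^sub>R mat 1 + s *\<^sub>R (transpose Z ** Z))"
      by (rule posdef_invertible) (use that in auto)
    then show ?thesis unfolding h_def K_def by (simp add: invertible_det_nz)
  qed
  have h0: "h 0 = 1" unfolding h_def by simp
  show ?thesis
  proof (rule ccontr)
    assume "\<not> ?thesis"
    then have "h 1 \<le> 0" unfolding h_def K_def by simp
    then obtain x where "0 \<le> x" "x \<le> 1" "h x = 0"
      using IVT2'[of h 1 0 0] cont h0 by auto
    then show False using nz by auto
  qed
qed

lemma det_deriv:
  fixes E G :: "real^'n^'n"
  shows "((\<lambda>t. det (mat 1 + t *\<^sub>R E + t^2 *\<^sub>R G)) has_real_derivative trace E) (at 0)"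
proof -
  define f where "f = (\<lambda>(p::'n\<Rightarrow>'n) i (t::real). (if i = p i then 1 else 0) + t * E$i$p i + t^2 * G$i$p i)"
  define P where "P = {p. p permutes (UNIV::'n set)}"
  have eq: "(\<lambda>t. det (mat 1 + t *\<^sub>R E + t^2 *\<^sub>R G)) = (\<lambda>t. \<Sum>p\<in>P. of_int (sign p) * (\<Prod>i\<in>UNIV. f p i t))"
    unfolding det_def f_def P_def by (simp add: mat_def)
  have dp: "((\<lambda>t. \<Prod>i\<in>UNIV. f p i t) has_real_derivative (\<Sum>i\<in>UNIV. E$i$p i * (\<Prod>j\<in>UNIV - {i}. f p j 0))) (at 0)" for p
  proof -
    have fi: "(f p i has_derivative (*) (E$i$p i)) (at 0)" for i
    proof -
      have "(f p i has_real_derivative (E$i$p i)) (at 0)"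
        unfolding f_def by (auto intro!: derivative_eq_intros)
      then show ?thesis by (simp add: has_field_derivative_def)
    qed
    have hd: "((\<lambda>t. \<Prod>i\<in>UNIV. f p i t) has_derivative (\<lambda>y. \<Sum>i\<in>UNIV. (E$i$p i * y) * (\<Prod>j\<in>UNIV - {i}. f p j 0))) (at 0)"
      by (rule has_derivative_prod) (use fi in auto)
    moreover have he: "(\<lambda>y. \<Sum>i\<in>UNIV. (E$i$p i * y) * (\<Prod>j\<in>UNIV - {i}. f p j 0))
        = (*) (\<Sum>i\<in>UNIV. E$i$p i * (\<Prod>j\<in>UNIV - {i}. f p j 0))"
    proof (rule ext)
      fix y
      have "(\<Sum>i\<in>UNIV. (E$i$p i * y) * (\<Prod>j\<in>UNIV - {i}. f p j 0))
          = (\<Sum>i\<in>UNIV. (E$i$p i * (\<Prod>j\<in>UNIV - {i}. f p j 0)) * y)"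
        by (simp add: mult.commute mult.left_commute mult.assoc)
      then show "(\<Sum>i\<in>UNIV. (E$i$p i * y) * (\<Prod>j\<in>UNIV - {i}. f p j 0))
          = (\<Sum>i\<in>UNIV. E$i$p i * (\<Prod>j\<in>UNIV - {i}. f p j 0)) * y"
        by (simp add: sum_distrib_right)
    qed
    show ?thesis unfolding has_field_derivative_def by (rule has_derivative_eq_rhs[OF hd he])
  qed
  have d: "((\<lambda>t. \<Sum>p\<in>P. of_int (sign p) * (\<Prod>i\<in>UNIV. f p i t)) has_real_derivative
     (\<Sum>p\<in>P. of_int (sign p) * (\<Sum>i\<in>UNIV. E$i$p i * (\<Prod>j\<in>UNIV - {i}. f p j 0)))) (at 0)"
    by (rule DERIV_sum, rule DERIV_cmult, rule dp)
  have zero: "(\<Sum>i\<in>UNIV. E$i$p i * (\<Prod>j\<in>UNIV - {i}. f p j 0)) = 0" if "p \<in> P" "p \<noteq> id" for p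
  proof -
    from that(2) obtain j0 where j0: "p j0 \<noteq> j0" by (metis eq_id_iff)
    have "inj p" using that(1) unfolding P_def by (simp add: permutes_inj)
    then have pp: "p (p j0) \<noteq> p j0"
      using j0 by (metis injD)
    have pz: "(\<Prod>j\<in>UNIV - {i}. f p j 0) = 0" for i
    proof (cases "i = j0")
      case True
      then show ?thesis using pp j0 by (intro prod_zero) (auto simp: f_def intro!: bexI[of _ "p j0"])
    next
      case False
      then show ?thesis using j0 by (intro prod_zero) (auto simp: f_def intro!: bexI[of _ j0])
    qed
    then show ?thesis by (intro sum.neutral ballI) (simp only: pz mult_zero_right)
  qed
  have idP: "id \<in> P" unfolding P_def by (simp add: permutes_id)
  have finP: "finite P" unfolding P_def by (simp add: finite_permutations)
  have calc0: "(\<Sum>p\<in>P. of_int (sign p) * (\<Sum>i\<in>UNIV. E$i$p i * (\<Prod>j\<in>UNIV - {i}. f p j 0)))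
      = of_int (sign (id::'n\<Rightarrow>'n)) * (\<Sum>i\<in>UNIV. E$i$id i * (\<Prod>j\<in>UNIV - {i}. f id j 0))
        + (\<Sum>p\<in>P - {id}. of_int (sign p) * (\<Sum>i\<in>UNIV. E$i$p i * (\<Prod>j\<in>UNIV - {i}. f p j 0)))"
    by (rule sum.remove[OF finP idP])
  have calc1: "(\<Sum>p\<in>P - {id}. of_int (sign p) * (\<Sum>i\<in>UNIV. E$i$p i * (\<Prod>j\<in>UNIV - {i}. f p j 0))) = 0"
    by (rule sum.neutral) (use zero in auto)
  have calc2: "of_int (sign (id::'n\<Rightarrow>'n)) * (\<Sum>i\<in>UNIV. E$i$id i * (\<Prod>j\<in>UNIV - {i}. f id j 0)) = trace E"
    by (simp add: sign_id f_def trace_def)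
  have calc: "(\<Sum>p\<in>P. of_int (sign p) * (\<Sum>i\<in>UNIV. E$i$p i * (\<Prod>j\<in>UNIV - {i}. f p j 0))) = trace E"
    using calc0 calc1 calc2 by linarith
  show ?thesis using d unfolding eq calc .
qed

lemma transpose_add: "transpose ((A::real^'n^'m) + B) = transpose A + transpose B"
  by (simp add: transpose_def vec_eq_iff)

lemma transpose_scaleR: "transpose (c *\<^sub>R (A::real^'n^'m)) = c *\<^sub>R transpose A"
  by (simp add: transpose_def vec_eq_iff)

lemma mm_scaleR_left: "(c *\<^sub>R (A::real^'n^'m)) ** (B::real^'k^'n) = c *\<^sub>R (A ** B)"
  by (simp add: matrix_matrix_mult_def vec_eq_iff sum_distrib_left mult.assoc)

lemma mm_scaleR_right: "(A::real^'n^'m) ** (c *\<^sub>R (B::real^'k^'n)) = c *\<^sub>R (A ** B)"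
  by (simp add: matrix_matrix_mult_def vec_eq_iff sum_distrib_left mult.left_commute)

lemma mm_add_rdistrib: "((A::real^'n^'m) + B) ** (C::real^'k^'n) = A ** C + B ** C"
  by (simp add: matrix_matrix_mult_def vec_eq_iff sum.distrib algebra_simps)

lemma mm_diff_ldistrib: "(A::real^'n^'m) ** ((B::real^'k^'n) - C) = A ** B - A ** C"
  by (simp add: matrix_matrix_mult_def vec_eq_iff sum_subtractf algebra_simps)

lemma mm_diff_rdistrib: "((A::real^'n^'m) - B) ** (C::real^'k^'n) = A ** C - B ** C"
  by (simp add: matrix_matrix_mult_def vec_eq_iff sum_subtractf algebra_simps)

lemma logdet_deriv:
  fixes Z H :: "real^'n^'n"
  shows "((\<lambda>t. logdet_F (Z + t *\<^sub>R H)) has_real_derivative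
           2 * inner (Z ** matrix_inv (mat 1 + transpose Z ** Z)) H) (at 0)"
proof -
  define M where "M = mat 1 + transpose Z ** Z"
  define P where "P = matrix_inv M"
  define B where "B = transpose H ** Z + transpose Z ** H"
  define C where "C = transpose H ** H"
  have invM: "invertible M"
    using posdef_invertible[of 1 1 Z] unfolding M_def by simp
  have MP: "M ** P = mat 1" "P ** M = mat 1" using inv_props[OF invM] unfolding P_def by auto
  have symM: "transpose M = M" unfolding M_def
    by (simp add: transpose_add matrix_transpose_mul)
  have symP: "transpose P = P" unfolding P_def by (rule inv_sym[OF symM invM])
  have expand: "mat 1 + transpose (Z + t *\<^sub>R H) ** (Z + t *\<^sub>R H)
      = M ** (mat 1 + t *\<^sub>R (P ** B) + t^2 *\<^sub>R (P ** C))" for t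
  proof -
    have "M ** (mat 1 + t *\<^sub>R (P ** B) + t^2 *\<^sub>R (P ** C)) = M + t *\<^sub>R B + t^2 *\<^sub>R C"
      by (simp add: matrix_add_ldistrib mm_scaleR_right matrix_mul_assoc MP)
    also have "\<dots> = mat 1 + transpose (Z + t *\<^sub>R H) ** (Z + t *\<^sub>R H)"
    proof -
      have "transpose (Z + t *\<^sub>R H) ** (Z + t *\<^sub>R H) = transpose Z ** Z + t *\<^sub>R (transpose H ** Z + transpose Z ** H) + t^2 *\<^sub>R (transpose H ** H)"
        by (simp add: transpose_add transpose_scaleR matrix_add_ldistrib mm_add_rdistrib mm_scaleR_left
            mm_scaleR_right scaleR_add_right power2_eq_square add_ac)
      then show ?thesis unfolding M_def B_def C_def by (simp add: add_ac)
    qed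
    finally show ?thesis by simp
  qed
  define d where "d = (\<lambda>t. det (mat 1 + t *\<^sub>R (P ** B) + t^2 *\<^sub>R (P ** C)))"
  have dd: "(d has_real_derivative trace (P ** B)) (at 0)" unfolding d_def by (rule det_deriv)
  have d0: "d 0 = 1" unfolding d_def by simp
  have detM: "det M > 0" unfolding M_def by (rule det_pos)
  have eqf: "(\<lambda>t. logdet_F (Z + t *\<^sub>R H)) = (\<lambda>t. ln (det M * d t))"
    unfolding logdet_F_def expand d_def by (simp add: det_mul)
  have g: "((\<lambda>t. det M * d t) has_real_derivative det M * trace (P ** B)) (at 0)"
    by (rule DERIV_cmult[OF dd])
  have l: "(ln has_real_derivative 1 / (det M * d 0)) (at (det M * d 0))"
    using detM d0 by (intro DERIV_ln_divide) simp
  have "((\<lambda>t. ln (det M * d t)) has_real_derivative (1 / (det M * d 0)) * (det M * trace (P ** B))) (at 0)"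
    by (rule DERIV_chain2[OF l g])
  moreover have "(1 / (det M * d 0)) * (det M * trace (P ** B)) = trace (P ** B)"
    using detM d0 by simp
  moreover have "trace (P ** B) = 2 * inner (Z ** P) H"
  proof -
    have i1: "inner (Z ** P) H = trace (P ** transpose Z ** H)"
      by (simp add: trace_tr_mult[symmetric] matrix_transpose_mul symP)
    have "trace (P ** transpose H ** Z) = trace (Z ** (P ** transpose H))"
      by (rule trace_mul_sym)
    also have "\<dots> = trace (transpose (Z ** (P ** transpose H)))" by (simp add: trace_transpose)
    also have "\<dots> = trace (H ** P ** transpose Z)"
      by (simp add: matrix_transpose_mul symP)
    also have "\<dots> = trace (P ** transpose Z ** H)"
      by (metis trace_mul_sym matrix_mul_assoc)
    finally have i2: "trace (P ** transpose H ** Z) = trace (P ** transpose Z ** H)" .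
    show ?thesis unfolding B_def
      by (simp add: matrix_add_ldistrib trace_add matrix_mul_assoc i1 i2[unfolded matrix_mul_assoc])
  qed
  ultimately show ?thesis unfolding eqf P_def M_def by simp
qed

lemma foc:
  fixes X :: "real^'n^'d" and Z W Y :: "real^'n^'n"
  assumes min: "\<And>Z'. aug_lagr X \<rho> Z W Y \<beta> \<le> aug_lagr X \<rho> Z' W Y \<beta>"
  shows "grad_F Z + (Y + \<beta> *\<^sub>R (Z - W)) = 0"
proof -
  define G where "G = grad_F Z + (Y + \<beta> *\<^sub>R (Z - W))"
  define V where "V = Z - W"
  define c where "c = \<rho> * (norm (X - X ** W))^2"
  define g where "g = (\<lambda>t. aug_lagr X \<rho> (Z + t *\<^sub>R G) W Y \<beta>)"
  have eqg: "g = (\<lambda>t. logdet_F (Z + t *\<^sub>R G) + c + \<beta> / 2 * ((norm V)^2 + 2 * t * inner V G + t^2 * (norm G)^2)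
       + (inner Y V + t * inner Y G))"
  proof
    fix t
    have a: "Z + t *\<^sub>R G - W = V + t *\<^sub>R G" unfolding V_def by simp
    have b: "(norm (V + t *\<^sub>R G))^2 = (norm V)^2 + 2 * t * inner V G + t^2 * (norm G)^2"
      unfolding power2_norm_eq_inner by (simp add: inner_add_left inner_add_right inner_commute power2_eq_square algebra_simps)
    show "g t = logdet_F (Z + t *\<^sub>R G) + c + \<beta> / 2 * ((norm V)^2 + 2 * t * inner V G + t^2 * (norm G)^2)
       + (inner Y V + t * inner Y G)"
      unfolding g_def aug_lagr_def frob_eq_norm trace_tr_mult a b c_def
      by (simp add: inner_add_right)
  qed
  have "(g has_real_derivative
      2 * inner (Z ** matrix_inv (mat 1 + transpose Z ** Z)) G + \<beta> / 2 * (2 * inner V G) + inner Y G) (at 0)"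
    unfolding eqg
    by (rule derivative_eq_intros logdet_deriv | simp)+
  moreover have "2 * inner (Z ** matrix_inv (mat 1 + transpose Z ** Z)) G + \<beta> / 2 * (2 * inner V G) + inner Y G
      = inner G G"
    unfolding G_def grad_F_def V_def
    by (simp add: inner_add_left algebra_simps)
  ultimately have dg: "(g has_real_derivative inner G G) (at 0)" by simp
  have "inner G G = 0"
  proof (rule DERIV_local_min[OF dg, of 1])
    show "\<forall>y. \<bar>0 - y\<bar> < 1 \<longrightarrow> g 0 \<le> g y" unfolding g_def using min by simp
  qed simp
  then show ?thesis unfolding G_def[symmetric] by simp
qed

lemma mm_neg_left: "(- (A::real^'n^'m)) ** (B::real^'k^'n) = - (A ** B)"
  by (simp add: matrix_matrix_mult_def vec_eq_iff sum_negf)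

lemma grad_rel:
  fixes Z Y :: "real^'n^'n"
  assumes "grad_F Z + Y = 0"
  shows "Y ** (mat 1 + transpose Z ** Z) = (-2) *\<^sub>R Z"
proof -
  have invM: "invertible (mat 1 + transpose Z ** Z)"
    using posdef_invertible[of 1 1 Z] by simp
  have PM: "matrix_inv (mat 1 + transpose Z ** Z) ** (mat 1 + transpose Z ** Z) = mat 1"
    using inv_props[OF invM] by auto
  have "Y = (-2) *\<^sub>R (Z ** matrix_inv (mat 1 + transpose Z ** Z))"
    using assms unfolding grad_F_def by (simp add: eq_neg_iff_add_eq_0 add.commute)
  then show ?thesis by (simp add: mm_scaleR_left mm_neg_left PM matrix_mul_assoc[symmetric])
qed

lemma grad_back:
  fixes Z Y :: "real^'n^'n"
  assumes "Y ** (mat 1 + transpose Z ** Z) = (-2) *\<^sub>R Z"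
  shows "grad_F Z + Y = 0"
proof -
  have invM: "invertible (mat 1 + transpose Z ** Z)"
    using posdef_invertible[of 1 1 Z] by simp
  have MP: "(mat 1 + transpose Z ** Z) ** matrix_inv (mat 1 + transpose Z ** Z) = mat 1"
    using inv_props[OF invM] by auto
  have "Y = Y ** (mat 1 + transpose Z ** Z) ** matrix_inv (mat 1 + transpose Z ** Z)"
    by (simp add: MP matrix_mul_assoc[symmetric])
  also have "\<dots> = (-2) *\<^sub>R (Z ** matrix_inv (mat 1 + transpose Z ** Z))"
    by (simp add: assms mm_scaleR_left mm_neg_left)
  finally show ?thesis unfolding grad_F_def by simp
qed

lemma inner_mm: "inner (P::real^'n^'m) (Q ** (R::real^'n^'k)) = inner (P ** transpose R) Q"
proof -
  have "inner P (Q ** R) = trace (transpose P ** Q ** R)"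
    by (simp add: trace_tr_mult[symmetric] matrix_mul_assoc)
  also have "\<dots> = trace (R ** (transpose P ** Q))"
    by (rule trace_mul_sym)
  also have "\<dots> = trace (transpose (P ** transpose R) ** Q)"
    by (simp add: matrix_transpose_mul matrix_mul_assoc)
  finally show ?thesis by (simp add: trace_tr_mult)
qed

lemma Ybound:
  fixes Z Y :: "real^'n^'n"
  assumes "Y ** (mat 1 + transpose Z ** Z) = (-2) *\<^sub>R Z"
  shows "norm Y \<le> 2 * norm Z"
proof -
  have e: "Y + (Y ** transpose Z) ** Z = (-2) *\<^sub>R Z"
    using assms by (simp add: matrix_add_ldistrib matrix_mul_assoc)
  have "inner Y (Y + (Y ** transpose Z) ** Z) = inner Y Y + inner (Y ** transpose Z) (Y ** transpose Z)"
    by (simp add: inner_add_right inner_mm)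
  moreover have "inner Y (Y + (Y ** transpose Z) ** Z) = -2 * inner Y Z"
    by (simp add: e)
  ultimately have "inner Y Y \<le> -2 * inner Y Z"
    by (metis inner_ge_zero le_add_same_cancel1)
  also have "\<dots> \<le> 2 * (norm Y * norm Z)"
    using norm_cauchy_schwarz[of Y "-Z"] by simp
  finally have "norm Y * norm Y \<le> norm Y * (2 * norm Z)"
    by (simp add: power2_norm_eq_inner[symmetric] power2_eq_square)
  then show ?thesis
    by (cases "norm Y = 0") (auto simp: mult_le_cancel_left_pos)
qed

lemma tendsto_mm:
  fixes f g :: "'a \<Rightarrow> real^'n^'n"
  assumes "(f \<longlongrightarrow> A) F" "(g \<longlongrightarrow> B) F"
  shows "((\<lambda>x. f x ** g x) \<longlongrightarrow> A ** B) F"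
  unfolding matrix_matrix_mult_def
  by (intro tendsto_vec_lambda tendsto_sum tendsto_mult tendsto_vec_nth assms)

lemma tendsto_transpose:
  fixes f :: "'a \<Rightarrow> real^'n^'n"
  assumes "(f \<longlongrightarrow> A) F"
  shows "((\<lambda>x. transpose (f x)) \<longlongrightarrow> transpose A) F"
  unfolding transpose_def
  by (intro tendsto_vec_lambda tendsto_vec_nth assms)

theorem theorem3:
  fixes X :: "real^'n^'d"
    and \<rho> \<beta>0 \<gamma> :: real
    and \<beta> :: "nat \<Rightarrow> real"
    and Z W Y :: "nat \<Rightarrow> real^'n^'n"
  assumes rho_pos: "\<rho> > 0"
    and beta0_pos: "\<beta>0 > 0"
    and gamma_gt: "\<gamma> > 1"
    and beta_def: "\<And>k. \<beta> k = \<gamma> ^ k * \<beta>0"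
    and Y0: "Y 0 = 0"
    and W_step: "\<And>k. W (Suc k) =
        matrix_inv (\<beta> k *\<^sub>R mat 1 + (2 * \<rho>) *\<^sub>R (transpose X ** X))
        ** ((2 * \<rho>) *\<^sub>R (transpose X ** X) + Y k + \<beta> k *\<^sub>R Z k)"
    and Z_step: "\<And>k Z'. aug_lagr X \<rho> (Z (Suc k)) (W (Suc k)) (Y k) (\<beta> k)
                       \<le> aug_lagr X \<rho> Z' (W (Suc k)) (Y k) (\<beta> k)"
    and Y_step: "\<And>k. Y (Suc k) = Y k + \<beta> k *\<^sub>R (Z (Suc k) - W (Suc k))"
    and Z_diff: "(\<lambda>k. \<beta> k *\<^sub>R (Z (Suc k) - Z k)) \<longlonglongrightarrow> 0"
  shows "(\<exists>p. accum_point (\<lambda>k. (Y k, W k, Z k)) p) \<and>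
         (\<forall>Ys Ws Zs. accum_point (\<lambda>k. (Y k, W k, Z k)) (Ys, Ws, Zs) \<longrightarrow>
            Zs = Ws \<and> grad_F Zs + Ys = 0 \<and>
            (2 * \<rho>) *\<^sub>R (transpose X ** X ** (Ws - mat 1)) = Ys)"
proof -
  define A where "A = transpose X ** X"
  define q where "q = 1 / \<gamma>"
  have q: "0 < q" "q < 1" using gamma_gt unfolding q_def by auto
  have bpos: "\<beta> k > 0" for k using beta_def beta0_pos gamma_gt by simp
  have binv: "1 / \<beta> k = (1 / \<beta>0) * q ^ k" for k
    unfolding beta_def q_def by (simp add: power_one_over)
  have inv: "invertible (\<beta> k *\<^sub>R mat 1 + (2 * \<rho>) *\<^sub>R A)" for k
    unfolding A_def by (rule posdef_invertible) (use bpos rho_pos in auto)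
  have Wk: "\<beta> k *\<^sub>R W (Suc k) + (2 * \<rho>) *\<^sub>R (A ** W (Suc k)) = (2 * \<rho>) *\<^sub>R A + Y k + \<beta> k *\<^sub>R Z k" for k
  proof -
    have "(\<beta> k *\<^sub>R mat 1 + (2 * \<rho>) *\<^sub>R A) ** W (Suc k) = (2 * \<rho>) *\<^sub>R A + Y k + \<beta> k *\<^sub>R Z k"
      unfolding W_step A_def[symmetric] using inv_props[OF inv[of k]]
      by (simp add: matrix_mul_assoc)
    then show ?thesis by (simp add: mm_add_rdistrib mm_scaleR_left)
  qed
  have focs: "grad_F (Z (Suc k)) + Y (Suc k) = 0" for k
    using foc[OF Z_step[of k]] Y_step[of k] by simp
  have key: "\<beta> k *\<^sub>R (Z (Suc k) - Z k) = Y (Suc k) + (2 * \<rho>) *\<^sub>R (A - A ** W (Suc k))" for k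
  proof -
    have e: "(2 * \<rho>) *\<^sub>R (A ** W (Suc k)) = (2 * \<rho>) *\<^sub>R A + Y k + \<beta> k *\<^sub>R Z k - \<beta> k *\<^sub>R W (Suc k)"
      using Wk[of k] by (metis add_diff_cancel_left')
    show ?thesis
      using Wk[of k] by (simp add: Y_step algebra_simps)
  qed
  obtain K where K: "K > 0" "\<And>k. norm (\<beta> k *\<^sub>R (Z (Suc k) - Z k)) \<le> K"
    using BseqE[OF convergent_imp_Bseq[OF convergentI[OF Z_diff]]] by metis
  have dZ: "norm (Z (Suc k) - Z k) \<le> (1 / \<beta>0 * q ^ k) * K" for k
  proof -
    have "norm (Z (Suc k) - Z k) = (1 / \<beta> k) * norm (\<beta> k *\<^sub>R (Z (Suc k) - Z k))"
      using bpos[of k] by simp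
    also have "\<dots> \<le> (1 / \<beta> k) * K" using K(2)[of k] bpos[of k] by (intro mult_left_mono) auto
    finally show ?thesis unfolding binv .
  qed
  have sg: "summable (\<lambda>k. (1 / \<beta>0 * q ^ k) * K)"
    by (rule summable_mult2, rule summable_mult, rule summable_geometric) (use q in simp)
  have "summable (\<lambda>k. Z (Suc k) - Z k)"
    by (rule summable_comparison_test'[OF sg]) (use dZ in simp)
  then have "(\<lambda>n. \<Sum>i<n. Z (Suc i) - Z i) \<longlonglongrightarrow> (\<Sum>i. Z (Suc i) - Z i)"
    by (rule summable_LIMSEQ)
  then have "(\<lambda>n. Z n - Z 0) \<longlonglongrightarrow> (\<Sum>i. Z (Suc i) - Z i)"
    by (simp add: sum_lessThan_telescope)
  then have "(\<lambda>n. (Z n - Z 0) + Z 0) \<longlonglongrightarrow> (\<Sum>i. Z (Suc i) - Z i) + Z 0"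
    by (intro tendsto_add tendsto_const)
  then have "Z \<longlonglongrightarrow> (\<Sum>i. Z (Suc i) - Z i) + Z 0" by simp
  then obtain Zl where Zl: "Z \<longlonglongrightarrow> Zl" by blast
  obtain KZ where KZ: "KZ > 0" "\<And>k. norm (Z k) \<le> KZ"
    using BseqE[OF convergent_imp_Bseq[OF convergentI[OF Zl]]] by metis
  have Yb: "norm (Y k) \<le> 2 * KZ" for k
  proof (cases k)
    case 0 then show ?thesis using Y0 KZ by simp
  next
    case (Suc m)
    have "norm (Y k) \<le> 2 * norm (Z k)"
      unfolding Suc by (rule Ybound[OF grad_rel[OF focs]])
    then show ?thesis using KZ(2)[of k] by simp
  qed
  have Wexp: "W (Suc k) = Z (Suc k) - (1 / \<beta> k) *\<^sub>R (Y (Suc k) - Y k)" for k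
    using bpos[of k] by (simp add: Y_step)
  have nul: "(\<lambda>k. (1 / \<beta> k) *\<^sub>R (Y (Suc k) - Y k)) \<longlonglongrightarrow> 0"
  proof (rule Lim_null_comparison)
    show "\<forall>\<^sub>F k in sequentially. norm ((1 / \<beta> k) *\<^sub>R (Y (Suc k) - Y k)) \<le> (1 / \<beta>0 * q ^ k) * (4 * KZ)"
    proof (intro always_eventually allI)
      fix k
      have "norm (Y (Suc k) - Y k) \<le> 4 * KZ"
        using norm_triangle_ineq4[of "Y (Suc k)" "Y k"] Yb[of k] Yb[of "Suc k"] by linarith
      then have "norm ((1 / \<beta> k) *\<^sub>R (Y (Suc k) - Y k)) \<le> (1 / \<beta> k) * (4 * KZ)"
        using bpos[of k] by (simp add: divide_right_mono)
      then show "norm ((1 / \<beta> k) *\<^sub>R (Y (Suc k) - Y k)) \<le> (1 / \<beta>0 * q ^ k) * (4 * KZ)"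
        unfolding binv .
    qed
    show "(\<lambda>k. (1 / \<beta>0 * q ^ k) * (4 * KZ)) \<longlonglongrightarrow> 0"
      by (rule tendsto_mult_left_zero, rule tendsto_mult_right_zero, rule LIMSEQ_power_zero) (use q in simp)
  qed
  have "(\<lambda>k. Z (Suc k) - (1 / \<beta> k) *\<^sub>R (Y (Suc k) - Y k)) \<longlonglongrightarrow> Zl - 0"
    by (rule tendsto_diff[OF LIMSEQ_Suc[OF Zl] nul])
  then have "(\<lambda>k. W (Suc k)) \<longlonglongrightarrow> Zl"
    by (simp add: Wexp)
  then have Wl: "W \<longlonglongrightarrow> Zl"
    by (rule LIMSEQ_imp_Suc)
  have "bounded (range Y)"
    unfolding bounded_iff using Yb by blast
  then obtain Yl r where r: "strict_mono r" "(Y \<circ> r) \<longlonglongrightarrow> Yl"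
    using bounded_imp_convergent_subsequence by blast
  have ex: "accum_point (\<lambda>k. (Y k, W k, Z k)) (Yl, Zl, Zl)"
    unfolding accum_point_def
  proof (intro exI conjI)
    show "strict_mono r" by (rule r(1))
    have "(\<lambda>j. (Y (r j), W (r j), Z (r j))) \<longlonglongrightarrow> (Yl, Zl, Zl)"
      using r(2) LIMSEQ_subseq_LIMSEQ[OF Wl r(1)] LIMSEQ_subseq_LIMSEQ[OF Zl r(1)]
      by (intro tendsto_Pair) (auto simp: o_def)
    then show "((\<lambda>k. (Y k, W k, Z k)) \<circ> r) \<longlonglongrightarrow> (Yl, Zl, Zl)" by (simp add: o_def)
  qed
  have qlim: "(\<lambda>k. Y k + (2 * \<rho>) *\<^sub>R (A - A ** W k)) \<longlonglongrightarrow> 0"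
    by (rule LIMSEQ_imp_Suc) (simp only: key[symmetric] Z_diff)
  have gz: "Y k ** (mat 1 + transpose (Z k) ** Z k) + 2 *\<^sub>R Z k = 0" if "k > 0" for k
  proof (cases k)
    case 0 then show ?thesis using that by simp
  next
    case (Suc m)
    show ?thesis unfolding Suc using grad_rel[OF focs[of m]] by simp
  qed
  have kkt: "Zs = Ws \<and> grad_F Zs + Ys = 0 \<and> (2 * \<rho>) *\<^sub>R (transpose X ** X ** (Ws - mat 1)) = Ys"
    if acc: "accum_point (\<lambda>k. (Y k, W k, Z k)) (Ys, Ws, Zs)" for Ys Ws Zs
  proof -
    obtain s where s: "strict_mono s" "((\<lambda>k. (Y k, W k, Z k)) \<circ> s) \<longlonglongrightarrow> (Ys, Ws, Zs)"
      using acc unfolding accum_point_def by blast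
    have sY: "(\<lambda>j. Y (s j)) \<longlonglongrightarrow> Ys" using tendsto_fst[OF s(2)] by (simp add: o_def)
    have sW: "(\<lambda>j. W (s j)) \<longlonglongrightarrow> Ws" using tendsto_fst[OF tendsto_snd[OF s(2)]] by (simp add: o_def)
    have sZ: "(\<lambda>j. Z (s j)) \<longlonglongrightarrow> Zs" using tendsto_snd[OF tendsto_snd[OF s(2)]] by (simp add: o_def)
    have "(\<lambda>j. Z (s j)) \<longlonglongrightarrow> Zl" using LIMSEQ_subseq_LIMSEQ[OF Zl s(1)] by (simp add: o_def)
    then have Zs: "Zs = Zl" using sZ LIMSEQ_unique by blast
    have "(\<lambda>j. W (s j)) \<longlonglongrightarrow> Zl" using LIMSEQ_subseq_LIMSEQ[OF Wl s(1)] by (simp add: o_def)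
    then have Ws: "Ws = Zl" using sW LIMSEQ_unique by blast
    have l1: "(\<lambda>j. Y (s j) ** (mat 1 + transpose (Z (s j)) ** Z (s j)) + 2 *\<^sub>R Z (s j))
        \<longlonglongrightarrow> Ys ** (mat 1 + transpose Zs ** Zs) + 2 *\<^sub>R Zs"
      by (intro tendsto_add tendsto_mm tendsto_transpose tendsto_scaleR tendsto_const sY sZ)
    have "(\<lambda>j. Y (s (Suc j)) ** (mat 1 + transpose (Z (s (Suc j))) ** Z (s (Suc j))) + 2 *\<^sub>R Z (s (Suc j)))
        \<longlonglongrightarrow> 0"
    proof -
      have "s (Suc j) > 0" for j using seq_suble[OF s(1), of "Suc j"] by simp
      then show ?thesis using gz by simp
    qed
    then have "(\<lambda>j. Y (s j) ** (mat 1 + transpose (Z (s j)) ** Z (s j)) + 2 *\<^sub>R Z (s j)) \<longlonglongrightarrow> 0"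
      by (rule LIMSEQ_imp_Suc)
    then have "Ys ** (mat 1 + transpose Zs ** Zs) + 2 *\<^sub>R Zs = 0"
      using l1 LIMSEQ_unique by blast
    then have "Ys ** (mat 1 + transpose Zs ** Zs) = (-2) *\<^sub>R Zs"
      by (simp add: eq_neg_iff_add_eq_0)
    then have g: "grad_F Zs + Ys = 0" by (rule grad_back)
    have "(\<lambda>j. Y (s j) + (2 * \<rho>) *\<^sub>R (A - A ** W (s j))) \<longlonglongrightarrow> 0"
      using LIMSEQ_subseq_LIMSEQ[OF qlim s(1)] by (simp add: o_def)
    moreover have "(\<lambda>j. Y (s j) + (2 * \<rho>) *\<^sub>R (A - A ** W (s j))) \<longlonglongrightarrow> Ys + (2 * \<rho>) *\<^sub>R (A - A ** Ws)"
      by (intro tendsto_add tendsto_scaleR tendsto_diff tendsto_mm tendsto_const sY sW)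
    ultimately have "Ys + (2 * \<rho>) *\<^sub>R (A - A ** Ws) = 0" using LIMSEQ_unique by blast
    then have "(2 * \<rho>) *\<^sub>R (A ** (Ws - mat 1)) = Ys"
      by (simp add: mm_diff_ldistrib algebra_simps eq_neg_iff_add_eq_0)
    then show ?thesis using Zs Ws g unfolding A_def by simp
  qed
  show ?thesis using ex kkt by blast
qed

end
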